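(* Let $0<\epsilon\le1/4$ and $0<\delta<1$. Let $\rho,\tilde\rho\in\mathbb{R}^{n\times n}$ be density matrices with $\sum_i|\tilde\rho_{ii}-\rho_{ii}|\le\epsilon/8$. Let $m=137\,\epsilon^{-2}(n\ln2+\ln(1/\delta))$, draw $N\sim\mathrm{Pois}(m)$, measure $N$ independent copies of $\tilde\rho$ in the computational basis, let $N_i$ be the number of outcomes equal to $i$, and set $\hat\rho_{ii}=N_i/m$. Then with probability at least $1-\delta$, $\sum_i|\hat\rho_{ii}-\rho_{ii}|\le\epsilon/4$.
   Context: A density matrix is a psd matrix of trace one; measuring $\tilde\rho$ in the computational basis yields outcome $i$ with probability $\tilde\rho_{ii}$. *)

theory Defs
  imports "HOL-Probability.Probability"
begin

text \<open>Real n x n matrices are represented as functions nat => nat => real,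
  with only indices below n relevant.\<close>

definition density_matrix :: "nat \<Rightarrow> (nat \<Rightarrow> nat \<Rightarrow> real) \<Rightarrow> bool" where
  "density_matrix n \<rho> \<longleftrightarrow>
     (\<forall>i<n. \<forall>j<n. \<rho> i j = \<rho> j i) \<and>
     (\<forall>x :: nat \<Rightarrow> real. (\<Sum>i<n. \<Sum>j<n. x i * \<rho> i j * x j) \<ge> 0) \<and>
     (\<Sum>i<n. \<rho> i i) = 1"

definition measure_comp_basis :: "nat \<Rightarrow> (nat \<Rightarrow> nat \<Rightarrow> real) \<Rightarrow> nat pmf" where
  "measure_comp_basis n \<rho> = embed_pmf (\<lambda>i. if i < n then \<rho> i i else 0)"

definition poissonized_measurements :: "real \<Rightarrow> nat \<Rightarrow> (nat \<Rightarrow> nat \<Rightarrow> real) \<Rightarrow> nat list pmf" where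
  "poissonized_measurements m n \<rho> =
     bind_pmf (poisson_pmf m) (\<lambda>N. replicate_pmf N (measure_comp_basis n \<rho>))"

end

theory Submission
  imports Defs
begin

lemma exp_up3:
  fixes t :: real assumes "0 \<le> t" "t \<le> 1"
  shows "exp t \<le> 1 + t + t^2/2 + t^3"
proof -
  let ?f = "\<lambda>x::real. 1 + x + x^2/2 + x^3 - exp x"
  have "?f 0 \<le> ?f t"
  proof (rule DERIV_nonneg_imp_nondecreasing[OF assms(1)])
    fix x :: real assume x: "0 \<le> x" "x \<le> t"
    have "DERIV ?f x :> 1 + x + 3 * x^2 - exp x"
      by (auto intro!: derivative_eq_intros simp: power2_eq_square)
    moreover have "exp x \<le> 1 + x + x^2" using exp_bound[of x] x assms by auto
    hence "1 + x + 3 * x^2 - exp x \<ge> 0" by (smt (verit) zero_le_power2)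
    ultimately show "\<exists>y. DERIV ?f x :> y \<and> y \<ge> 0" by blast
  qed
  thus ?thesis by simp
qed

lemma exp_neg_up:
  fixes t :: real assumes "0 \<le> t"
  shows "exp (-t) \<le> 1 - t + t^2/2"
proof -
  let ?f = "\<lambda>x::real. 1 - x + x^2/2 - exp (-x)"
  have "?f 0 \<le> ?f t"
  proof (rule DERIV_nonneg_imp_nondecreasing[OF assms(1)])
    fix x :: real assume x: "0 \<le> x" "x \<le> t"
    have "DERIV ?f x :> -1 + x + exp (-x)"
      by (auto intro!: derivative_eq_intros simp: power2_eq_square)
    moreover have "exp (-x) \<ge> 1 - x" using exp_ge_add_one_self[of "-x"] by simp
    hence "-1 + x + exp (-x) \<ge> 0" by simp
    ultimately show "\<exists>y. DERIV ?f x :> y \<and> y \<ge> 0" by blast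
  qed
  thus ?thesis by simp
qed

lemma poisson_mgf:
  fixes r a :: real assumes r: "0 < r" and a: "0 \<le> a"
  shows "(\<integral>\<^sup>+N. ennreal (a ^ N) \<partial>measure_pmf (poisson_pmf r)) = ennreal (exp (r * (a - 1)))"
proof -
  have summable: "summable (\<lambda>x::nat. (r*a) ^ x / fact x)" using summable_exp[of "r*a"]
    by (simp add: field_simps divide_inverse [symmetric])
  have "(\<integral>\<^sup>+N. ennreal (a ^ N) \<partial>measure_pmf (poisson_pmf r)) =
     (\<integral>\<^sup>+N. ennreal (exp (-r)) * ennreal ((r*a) ^ N / fact N) \<partial>count_space UNIV)"
    unfolding nn_integral_measure_pmf using r a
    by (intro nn_integral_cong) (simp add: ennreal_mult'[symmetric] power_mult_distrib field_simps)
  also have "\<dots> = ennreal (exp (-r)) * (\<integral>\<^sup>+N. ennreal ((r*a) ^ N / fact N) \<partial>count_space UNIV)"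
    by (simp add: nn_integral_cmult)
  also have "(\<integral>\<^sup>+N. ennreal ((r*a) ^ N / fact N) \<partial>count_space UNIV) = ennreal (\<Sum>x. (r*a) ^ x / fact x)"
    using r a by (simp_all add: nn_integral_count_space_nat suminf_ennreal summable ennreal_suminf_neq_top)
  also have "(\<Sum>x. (r*a) ^ x / fact x) = exp (r*a)" unfolding exp_def
    by (simp add: field_simps divide_inverse [symmetric])
  also have "ennreal (exp (-r)) * ennreal (exp (r*a)) = ennreal (exp (r * (a - 1)))"
    by (simp add: ennreal_mult[symmetric] mult_exp_exp algebra_simps)
  finally show ?thesis .
qed

lemma replicate_mgf:
  fixes w :: "'a \<Rightarrow> real" assumes w: "\<And>x. 0 \<le> w x"
  shows "(\<integral>\<^sup>+xs. ennreal (prod_list (map w xs)) \<partial>measure_pmf (replicate_pmf N D)) =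
         (\<integral>\<^sup>+x. ennreal (w x) \<partial>measure_pmf D) ^ N"
proof (induction N)
  case 0 then show ?case by simp
next
  case (Suc N)
  have "(\<integral>\<^sup>+xs. ennreal (prod_list (map w xs)) \<partial>measure_pmf (replicate_pmf (Suc N) D)) =
     (\<integral>\<^sup>+x. \<integral>\<^sup>+xs. ennreal (w x) * ennreal (prod_list (map w xs)) \<partial>measure_pmf (replicate_pmf N D) \<partial>measure_pmf D)"
    using w by (simp add: ennreal_mult' prod_list_nonneg)
  also have "\<dots> = (\<integral>\<^sup>+x. ennreal (w x) * (\<integral>\<^sup>+x. ennreal (w x) \<partial>measure_pmf D) ^ N \<partial>measure_pmf D)"
    by (simp add: nn_integral_cmult Suc.IH)
  also have "\<dots> = (\<integral>\<^sup>+x. ennreal (w x) \<partial>measure_pmf D) ^ Suc N"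
    by (simp add: nn_integral_multc)
  finally show ?case .
qed

lemma exp_count:
  fixes lam :: "nat \<Rightarrow> real"
  shows "exp (\<Sum>i<n. lam i * real (count_list xs i)) = prod_list (map (\<lambda>x. if x < n then exp (lam x) else 1) xs)"
proof (induction xs)
  case Nil then show ?case by simp
next
  case (Cons x xs)
  have "(\<Sum>i<n. lam i * real (count_list (x#xs) i)) = (\<Sum>i<n. lam i * real (count_list xs i)) + (\<Sum>i<n. if x = i then lam i else 0)"
    by (subst sum.distrib[symmetric], rule sum.cong) (auto simp: algebra_simps)
  also have "(\<Sum>i<n. if x = i then lam i else 0) = (if x < n then lam x else 0)"
    by (simp add: sum.delta)
  finally show ?case using Cons by (simp add: exp_add)
qed

lemma pmf_comp:
  assumes nn: "\<forall>i<n. 0 \<le> \<rho> i i" and s1: "(\<Sum>i<n. \<rho> i i) = 1"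
  shows "pmf (measure_comp_basis n \<rho>) x = (if x < n then \<rho> x x else 0)"
proof -
  have "(\<integral>\<^sup>+x. ennreal (if x < n then \<rho> x x else 0) \<partial>count_space UNIV) =
        (\<integral>\<^sup>+x. ennreal (\<rho> x x) * indicator {..<n} x \<partial>count_space UNIV)"
    by (intro nn_integral_cong) (auto split: split_indicator)
  also have "\<dots> = (\<Sum>x<n. ennreal (\<rho> x x))"
    by (subst nn_integral_indicator_finite) auto
  also have "\<dots> = 1" using nn s1 by (subst sum_ennreal) auto
  finally show ?thesis unfolding measure_comp_basis_def
    by (subst pmf_embed_pmf) (use nn in auto)
qed

lemma comp_nn:
  assumes nn: "\<forall>i<n. 0 \<le> \<rho> i i" and s1: "(\<Sum>i<n. \<rho> i i) = 1" and w: "\<And>x. 0 \<le> w x"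
  shows "(\<integral>\<^sup>+x. ennreal (w x) \<partial>measure_pmf (measure_comp_basis n \<rho>)) = ennreal (\<Sum>i<n. \<rho> i i * w i)"
proof -
  have "(\<integral>\<^sup>+x. ennreal (w x) \<partial>measure_pmf (measure_comp_basis n \<rho>)) =
     (\<Sum>x<n. ennreal (w x) * pmf (measure_comp_basis n \<rho>) x)"
    by (rule nn_integral_measure_pmf_support) (auto simp: set_pmf_eq pmf_comp[of n \<rho>, OF nn s1])
  also have "\<dots> = (\<Sum>x<n. ennreal (\<rho> x x * w x))"
    using nn w by (intro sum.cong) (auto simp: pmf_comp[of n \<rho>, OF nn s1] ennreal_mult'[symmetric] mult.commute)
  also have "\<dots> = ennreal (\<Sum>i<n. \<rho> i i * w i)" using nn w by (subst sum_ennreal) auto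
  finally show ?thesis .
qed

lemma main_mgf:
  assumes m: "0 < m" and nn: "\<forall>i<n. 0 \<le> \<rho> i i" and s1: "(\<Sum>i<n. \<rho> i i) = 1"
  shows "(\<integral>\<^sup>+xs. ennreal (exp (\<Sum>i<n. lam i * real (count_list xs i))) \<partial>measure_pmf (poissonized_measurements m n \<rho>))
      = ennreal (exp (m * ((\<Sum>i<n. \<rho> i i * exp (lam i)) - 1)))"
proof -
  define w where "w = (\<lambda>x. if x < n then exp (lam x) else 1)"
  have w: "\<And>x. 0 \<le> w x" by (simp add: w_def)
  have q: "(\<integral>\<^sup>+x. ennreal (w x) \<partial>measure_pmf (measure_comp_basis n \<rho>)) = ennreal (\<Sum>i<n. \<rho> i i * exp (lam i))"
    by (subst comp_nn[of n \<rho> w, OF nn s1 w]) (simp add: w_def)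
  have qn: "0 \<le> (\<Sum>i<n. \<rho> i i * exp (lam i))" using nn by (intro sum_nonneg) auto
  show ?thesis unfolding poissonized_measurements_def nn_integral_bind_pmf exp_count
    apply (fold w_def)
    apply (subst replicate_mgf[OF w])
    apply (subst q)
    using poisson_mgf[OF m qn] by (simp add: ennreal_power[OF qn, symmetric])
qed

theorem lemma9:
  fixes n :: nat and \<epsilon> \<delta> m :: real and \<rho> \<rho>t :: "nat \<Rightarrow> nat \<Rightarrow> real"
  assumes "0 < \<epsilon>" and "\<epsilon> \<le> 1/4" and "0 < \<delta>" and "\<delta> < 1"
    and "density_matrix n \<rho>" and "density_matrix n \<rho>t"
    and "(\<Sum>i<n. \<bar>\<rho>t i i - \<rho> i i\<bar>) \<le> \<epsilon> / 8"
    and "m = 137 / \<epsilon>\<^sup>2 * (real n * ln 2 + ln (1 / \<delta>))"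
  shows "measure_pmf.prob (poissonized_measurements m n \<rho>t)
           {xs. (\<Sum>i<n. \<bar>real (count_list xs i) / m - \<rho> i i\<bar>) \<le> \<epsilon> / 4} \<ge> 1 - \<delta>"
proof -
  note eps = assms(1,2) and del = assms(3,4) and dm = assms(6) and close = assms(7) and mdef = assms(8)
  define p where "p = (\<lambda>i. \<rho>t i i)"
  define M where "M = poissonized_measurements m n \<rho>t"
  have nn: "\<forall>i<n. 0 \<le> \<rho>t i i"
  proof (intro allI impI)
    fix k assume k: "k < n"
    have psd: "\<forall>x::nat\<Rightarrow>real. 0 \<le> (\<Sum>i<n. \<Sum>j<n. x i * \<rho>t i j * x j)"
      using dm unfolding density_matrix_def by blast
    have "0 \<le> (\<Sum>i<n. \<Sum>j<n. (\<lambda>j. if j = k then 1 else 0) i * \<rho>t i j * (\<lambda>j. if j = k then (1::real) else 0) j)"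
      by (rule psd[rule_format])
    also have "\<dots> = (\<Sum>i<n. if i = k then \<rho>t i k else 0)"
    proof (rule sum.cong)
      fix i assume "i \<in> {..<n}"
      have "(\<Sum>j<n. (\<lambda>j. if j = k then 1 else 0) i * \<rho>t i j * (\<lambda>j. if j = k then (1::real) else 0) j)
          = (\<Sum>j<n. if j = k then (if i = k then \<rho>t i j else 0) else 0)"
        by (intro sum.cong) auto
      also have "\<dots> = (if i = k then \<rho>t i k else 0)" using k by (simp add: sum.delta)
      finally show "(\<Sum>j<n. (\<lambda>j. if j = k then 1 else 0) i * \<rho>t i j * (\<lambda>j. if j = k then (1::real) else 0) j)
          = (if i = k then \<rho>t i k else 0)" .
    qed simp
    also have "\<dots> = \<rho>t k k" using k by (simp add: sum.delta)
    finally show "0 \<le> \<rho>t k k" .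
  qed
  have s1: "(\<Sum>i<n. \<rho>t i i) = 1" using dm unfolding density_matrix_def by blast
  define L where "L = real n * ln 2 + ln (1 / \<delta>)"
  have L0: "0 \<le> L"
  proof -
    have "0 < ln (1 / \<delta>)" using del by (simp add: ln_div)
    moreover have "0 \<le> real n * ln 2" by simp
    ultimately show ?thesis unfolding L_def by linarith
  qed
  define t where "t = \<epsilon> / 8"
  have t0: "0 < t" and t1: "t \<le> 1/32" using eps by (auto simp: t_def)
  have mt: "m * t^2 = 137 / 64 * L" unfolding mdef L_def t_def using eps by (simp add: field_simps power2_eq_square)
  have m0: "0 < m"
  proof -
    have "0 < ln (1 / \<delta>)" using del by (simp add: ln_div)
    hence "0 < L" unfolding L_def by (simp add: add_nonneg_pos)
    thus ?thesis unfolding mdef L_def[symmetric] using eps by simp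
  qed
  define sg where "sg = (\<lambda>S (i::nat). if i \<in> S then (1::real) else -1)"
  define lam where "lam = (\<lambda>S i. t * sg S i)"
  define F where "F = (\<lambda>S xs. exp (t * (\<Sum>i<n. sg S i * (real (count_list xs i) - m * p i)) - m * t^2))"
  define C where "C = (\<lambda>S. - (t * m * (\<Sum>i<n. sg S i * p i)) - m * t^2)"
  define a where "a = (\<lambda>S. exp (m * ((\<Sum>i<n. \<rho>t i i * exp (lam S i)) - 1)) * exp (C S))"
  have Fsplit: "F S xs = exp (\<Sum>i<n. lam S i * real (count_list xs i)) * exp (C S)" for S xs
  proof -
    have "t * (\<Sum>i<n. sg S i * (real (count_list xs i) - m * p i)) - m * t^2
       = (\<Sum>i<n. lam S i * real (count_list xs i)) + C S"
      unfolding C_def lam_def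
      by (simp add: sum_distrib_left sum_subtractf algebra_simps)
    thus ?thesis unfolding F_def by (simp add: exp_add)
  qed
  have intF: "(\<integral>\<^sup>+xs. ennreal (F S xs) \<partial>measure_pmf M) = ennreal (a S)" for S
  proof -
    have "(\<integral>\<^sup>+xs. ennreal (F S xs) \<partial>measure_pmf M) =
      (\<integral>\<^sup>+xs. ennreal (exp (\<Sum>i<n. lam S i * real (count_list xs i))) * ennreal (exp (C S)) \<partial>measure_pmf M)"
      by (simp add: Fsplit ennreal_mult)
    also have "\<dots> = ennreal (exp (m * ((\<Sum>i<n. \<rho>t i i * exp (lam S i)) - 1))) * ennreal (exp (C S))"
      by (simp add: nn_integral_multc M_def main_mgf[of m n \<rho>t, OF m0 nn s1])
    also have "\<dots> = ennreal (a S)" by (simp add: a_def ennreal_mult)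
    finally show ?thesis .
  qed
  have abound: "a S \<le> \<delta> / 2^n" for S
  proof -
    have g: "exp (lam S i) - 1 - lam S i \<le> 17/32 * t^2" for i
    proof (cases "i \<in> S")
      case True
      have "exp t \<le> 1 + t + t^2/2 + t^3" using exp_up3[of t] t0 t1 by simp
      moreover have "t^3 \<le> t^2 / 32" using t0 t1 by (simp add: power3_eq_cube power2_eq_square mult_left_mono)
      moreover have "exp (lam S i) - 1 - lam S i = exp t - 1 - t" using True by (simp add: lam_def sg_def)
      ultimately show ?thesis by linarith
    next
      case False
      have "exp (-t) \<le> 1 - t + t^2/2" using exp_neg_up[of t] t0 by simp
      moreover have "0 \<le> t^2" by simp
      moreover have "exp (lam S i) - 1 - lam S i = exp (-t) - 1 + t" using False by (simp add: lam_def sg_def)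
      ultimately show ?thesis by linarith
    qed
    have "(\<Sum>i<n. \<rho>t i i * exp (lam S i)) - 1 - t * (\<Sum>i<n. sg S i * p i)
        = (\<Sum>i<n. \<rho>t i i * (exp (lam S i) - 1 - lam S i))"
      using s1 by (simp add: p_def lam_def sum_distrib_left sum_subtractf sum.distrib algebra_simps)
    also have "\<dots> \<le> (\<Sum>i<n. \<rho>t i i * (17/32 * t^2))"
      using nn g by (intro sum_mono mult_left_mono) auto
    also have "\<dots> = 17/32 * t^2" by (simp only: sum_distrib_right[symmetric] s1 mult_1)
    finally have e1: "(\<Sum>i<n. \<rho>t i i * exp (lam S i)) - 1 - t * (\<Sum>i<n. sg S i * p i) \<le> 17/32 * t^2" .
    have "m * ((\<Sum>i<n. \<rho>t i i * exp (lam S i)) - 1) + C S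
        = m * ((\<Sum>i<n. \<rho>t i i * exp (lam S i)) - 1 - t * (\<Sum>i<n. sg S i * p i)) - m * t^2"
      by (simp add: C_def algebra_simps)
    also have "\<dots> \<le> m * (17/32 * t^2) - m * t^2" using mult_left_mono[OF e1 less_imp_le[OF m0]] by linarith
    also have "\<dots> = - (15/32) * (m * t^2)" by (simp add: algebra_simps)
    also have "\<dots> \<le> - L" unfolding mt using L0 by simp
    finally have ex: "m * ((\<Sum>i<n. \<rho>t i i * exp (lam S i)) - 1) + C S \<le> - L" .
    have "a S = exp (m * ((\<Sum>i<n. \<rho>t i i * exp (lam S i)) - 1) + C S)" by (simp add: a_def exp_add)
    also have "\<dots> \<le> exp (-L)" using ex by simp
    also have "exp (-L) = \<delta> / 2^n"
    proof -
      have "exp (real n * ln 2) = 2^n" by (simp add: exp_of_nat_mult)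
      moreover have "exp (ln (1/\<delta>)) = 1/\<delta>" using del by simp
      moreover have "exp (-L) = inverse (exp (real n * ln 2) * exp (ln (1/\<delta>)))"
        unfolding L_def by (simp add: exp_minus[symmetric] exp_add[symmetric] del: exp_ln)
      ultimately show ?thesis using del by (simp add: field_simps)
    qed
    finally show ?thesis .
  qed
  define B where "B = {xs. \<not> (\<Sum>i<n. \<bar>real (count_list xs i) / m - p i\<bar>) \<le> t}"
  have ind: "indicator B xs \<le> (\<Sum>S\<in>Pow {..<n}. ennreal (F S xs))" for xs
  proof (cases "xs \<in> B")
    case False then show ?thesis by simp
  next
    case True
    define S0 where "S0 = {i\<in>{..<n}. m * p i \<le> real (count_list xs i)}"
    have "(\<Sum>i<n. sg S0 i * (real (count_list xs i) - m * p i)) = (\<Sum>i<n. m * \<bar>real (count_list xs i) / m - p i\<bar>)"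
    proof (rule sum.cong)
      fix i assume i: "i \<in> {..<n}"
      have "m * \<bar>real (count_list xs i) / m - p i\<bar> = \<bar>real (count_list xs i) - m * p i\<bar>"
        using m0 by (simp add: abs_mult[symmetric] field_simps)
      thus "sg S0 i * (real (count_list xs i) - m * p i) = m * \<bar>real (count_list xs i) / m - p i\<bar>"
        using i by (auto simp: sg_def S0_def)
    qed simp
    also have "\<dots> = m * (\<Sum>i<n. \<bar>real (count_list xs i) / m - p i\<bar>)" by (simp add: sum_distrib_left)
    also have "\<dots> > m * t" using True m0 by (simp add: B_def)
    finally have "t * (\<Sum>i<n. sg S0 i * (real (count_list xs i) - m * p i)) - m * t^2 > 0"
      using t0 by (simp add: power2_eq_square)
    hence "F S0 xs \<ge> 1" unfolding F_def by simp
    hence "indicator B xs \<le> ennreal (F S0 xs)" using True by simp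
    also have "\<dots> \<le> (\<Sum>S\<in>Pow {..<n}. ennreal (F S xs))"
      by (rule member_le_sum) (auto simp: S0_def)
    finally show ?thesis .
  qed
  have "emeasure (measure_pmf M) B = (\<integral>\<^sup>+xs. indicator B xs \<partial>measure_pmf M)" by simp
  also have "\<dots> \<le> (\<integral>\<^sup>+xs. (\<Sum>S\<in>Pow {..<n}. ennreal (F S xs)) \<partial>measure_pmf M)"
    by (intro nn_integral_mono ind)
  also have "\<dots> = (\<Sum>S\<in>Pow {..<n}. \<integral>\<^sup>+xs. ennreal (F S xs) \<partial>measure_pmf M)"
    by (rule nn_integral_sum) simp
  also have "\<dots> = ennreal (\<Sum>S\<in>Pow {..<n}. a S)"
    by (simp add: intF a_def sum_ennreal)
  also have "\<dots> \<le> ennreal (\<Sum>S\<in>Pow {..<n}. \<delta> / 2^n)"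
    by (intro ennreal_leI sum_mono abound)
  also have "(\<Sum>S\<in>Pow {..<n}. \<delta> / 2^n) = \<delta>" by (simp add: card_Pow)
  finally have eB: "emeasure (measure_pmf M) B \<le> ennreal \<delta>" .
  have pB: "measure_pmf.prob M B \<le> \<delta>"
    using eB del by (simp add: measure_pmf.emeasure_eq_measure)
  have sub: "UNIV - B \<subseteq> {xs. (\<Sum>i<n. \<bar>real (count_list xs i) / m - \<rho> i i\<bar>) \<le> \<epsilon> / 4}"
  proof
    fix xs assume "xs \<in> UNIV - B"
    hence h: "(\<Sum>i<n. \<bar>real (count_list xs i) / m - p i\<bar>) \<le> t" by (simp add: B_def)
    have "(\<Sum>i<n. \<bar>real (count_list xs i) / m - \<rho> i i\<bar>) \<le>
          (\<Sum>i<n. \<bar>real (count_list xs i) / m - p i\<bar> + \<bar>\<rho>t i i - \<rho> i i\<bar>)"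
      by (intro sum_mono) (simp add: p_def)
    also have "\<dots> \<le> \<epsilon> / 4" using h close by (simp add: sum.distrib t_def)
    finally show "xs \<in> {xs. (\<Sum>i<n. \<bar>real (count_list xs i) / m - \<rho> i i\<bar>) \<le> \<epsilon> / 4}" by simp
  qed
  have "1 - \<delta> \<le> 1 - measure_pmf.prob M B" using pB by simp
  also have "\<dots> = measure_pmf.prob M (UNIV - B)"
    using measure_pmf.prob_compl[of B M] by simp
  also have "\<dots> \<le> measure_pmf.prob M {xs. (\<Sum>i<n. \<bar>real (count_list xs i) / m - \<rho> i i\<bar>) \<le> \<epsilon> / 4}"
    using sub by (intro measure_pmf.finite_measure_mono) auto
  finally show ?thesis unfolding M_def .
qed

end
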